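(* Let $R\subseteq S$ be integral domains and let $\mathbf A$ be a matrix with entries in $R$. Then $\mathbf A$ satisfies the columns condition as a matrix with entries in $R$ if and only if it satisfies the columns condition as a matrix with entries in $S$.
   Context: Columns condition: for a $k\times l$ matrix over a domain $D$ with fraction field $K$ and columns $\mathbf c_1,\dots,\mathbf c_l\in D^k$, it holds if there exist an integer $m\ge0$ and a partition $\{1,\dots,l\}=I_0\cup\dots\cup I_m$ such that $\sum_{i\in I_0}\mathbf c_i=0$ and for each $t\in\{1,\dots,m\}$, $\sum_{i\in I_t}\mathbf c_i$ lies in the $K$-vector space spanned by the $\mathbf c_j$ with $j\in I_0\cup\dots\cup I_{t-1}$. *)

theory Defs
  imports "HOL-Computational_Algebra.Fraction_Field"
begin

text \<open>A k x l matrix over a domain D is a function nat => nat => D (row r < k, column i < l;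
  columns indexed by 0..<l). The fraction field K of D is the type D fract, with canonical
  embedding x |-> Fract x 1. The columns condition: there exist m and a partition
  I 0, ..., I m of the column indices such that the columns indexed by I 0 sum to zero,
  and for each t in 1..m the sum of the columns indexed by I t is a K-linear combination
  of the columns indexed by I 0 u ... u I (t-1).\<close>

definition columns_condition :: "nat \<Rightarrow> nat \<Rightarrow> (nat \<Rightarrow> nat \<Rightarrow> 'a::idom) \<Rightarrow> bool" where
  "columns_condition k l A \<longleftrightarrow>
     (\<exists>(m::nat) (I::nat \<Rightarrow> nat set).
        (\<Union>t\<in>{..m}. I t) = {..<l} \<and>
        (\<forall>s\<le>m. \<forall>t\<le>m. s \<noteq> t \<longrightarrow> I s \<inter> I t = {}) \<and>
        (\<forall>r<k. (\<Sum>i\<in>I 0. A r i) = 0) \<and>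
        (\<forall>t\<in>{1..m}. \<exists>c::nat \<Rightarrow> 'a fract.
            \<forall>r<k. Fract (\<Sum>i\<in>I t. A r i) 1 = (\<Sum>j\<in>(\<Union>s<t. I s). c j * Fract (A r j) 1)))"

end

theory Submission
  imports Defs HOL.Vector_Spaces
begin

definition fhom :: "('r::idom \<Rightarrow> 's::idom) \<Rightarrow> 'r fract \<Rightarrow> 's fract" where
  "fhom f q = (SOME y. \<exists>a b. b \<noteq> 0 \<and> q = Fract a b \<and> y = Fract (f a) (f b))"

lemma fhom_Fract:
  fixes f :: "'r::idom \<Rightarrow> 's::idom"
  assumes inj: "inj f" and f0: "f 0 = 0"
    and fm: "\<And>x y. f (x * y) = f x * f y"
    and b: "b \<noteq> 0"
  shows "fhom f (Fract a b) = Fract (f a) (f b)"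
proof -
  have nz: "f x \<noteq> 0" if "x \<noteq> 0" for x using inj f0 that by (metis injD)
  have "\<exists>a' b'. b' \<noteq> 0 \<and> Fract a b = Fract a' b' \<and> fhom f (Fract a b) = Fract (f a') (f b')"
    unfolding fhom_def by (rule someI_ex) (use b in blast)
  then obtain a' b' where h: "b' \<noteq> 0" "Fract a b = Fract a' b'"
     "fhom f (Fract a b) = Fract (f a') (f b')" by blast
  from h(2) have "a * b' = a' * b" using eq_fract(1)[OF b h(1)] by simp
  hence "f a * f b' = f a' * f b" by (metis fm)
  thus ?thesis using h(3) eq_fract(1)[OF nz[OF h(1)] nz[OF b], of "f a'" "f a"] by simp
qed

locale homs =
  fixes f :: "'r::idom \<Rightarrow> 's::idom"
  assumes inj: "inj f"
    and f0: "f 0 = 0" and f1: "f 1 = 1"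
    and fa: "\<And>x y. f (x + y) = f x + f y"
    and fm: "\<And>x y. f (x * y) = f x * f y"
begin

lemma nz: "x \<noteq> 0 \<Longrightarrow> f x \<noteq> 0" using inj f0 by (metis injD)

lemma f_eq0: "f x = 0 \<longleftrightarrow> x = 0" using nz f0 by blast

lemma FF: "b \<noteq> 0 \<Longrightarrow> fhom f (Fract a b) = Fract (f a) (f b)"
  by (rule fhom_Fract[OF inj f0 fm])

lemma fsum: "f (sum g S) = (\<Sum>i\<in>S. f (g i))"
  by (induction S rule: infinite_finite_induct) (auto simp: f0 fa)

lemma hadd: "fhom f (x + y) = fhom f x + fhom f y"
proof (cases x)
  case (Fract a b)
  show ?thesis
  proof (cases y)
    case (Fract c d)
    thus ?thesis using \<open>x = Fract a b\<close> \<open>b \<noteq> 0\<close>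
      by (simp add: FF nz fa fm)
  qed
qed

lemma hmult: "fhom f (x * y) = fhom f x * fhom f y"
proof (cases x)
  case (Fract a b)
  show ?thesis
  proof (cases y)
    case (Fract c d)
    thus ?thesis using \<open>x = Fract a b\<close> \<open>b \<noteq> 0\<close>
      by (simp add: FF nz fm)
  qed
qed

lemma h1: "fhom f 1 = 1"
  using FF[of 1 1] by (simp add: f1 One_fract_def)

lemma h0: "fhom f 0 = 0"
  using FF[of 1 0] by (simp add: f0 Zero_fract_def eq_fract)

lemma hsum: "fhom f (sum g S) = (\<Sum>i\<in>S. fhom f (g i))"
  by (induction S rule: infinite_finite_induct) (auto simp: h0 hadd)

lemma hF1: "fhom f (Fract a 1) = Fract (f a) 1"
  using FF[of 1 a] by (simp add: f1)

end

theorem lemma3p1: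
  fixes f :: "'r::idom \<Rightarrow> 's::idom"
    and A :: "nat \<Rightarrow> nat \<Rightarrow> 'r"
    and k l :: nat
  assumes "inj f"
    and "f 0 = 0" and "f 1 = 1"
    and "\<And>x y. f (x + y) = f x + f y"
    and "\<And>x y. f (x * y) = f x * f y"
  shows "columns_condition k l A \<longleftrightarrow> columns_condition k l (\<lambda>r i. f (A r i))"
proof -
  interpret homs f using assms by unfold_locales
  define s1 :: "'r fract \<Rightarrow> 's fract \<Rightarrow> 's fract" where "s1 = (\<lambda>a y. fhom f a * y)"
  interpret vp: vector_space_pair s1 "(*) :: 'r fract \<Rightarrow> 'r fract \<Rightarrow> 'r fract"
    by unfold_locales (auto simp: s1_def algebra_simps hadd hmult h1)
  have "vp.vs1.independent {1}" by simp
  from vp.linear_independent_extend[OF this, of "\<lambda>_. 1"] obtain g where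
    g: "Vector_Spaces.linear s1 (*) g" "g 1 = 1" by auto
  have sumeq: "(\<Sum>i\<in>S. f (A r i)) = 0 \<longleftrightarrow> (\<Sum>i\<in>S. A r i) = 0" for S r
    by (simp only: fsum[symmetric] f_eq0)
  show ?thesis
  proof
    assume "columns_condition k l A"
    then obtain m :: nat and I where I: "(\<Union>t\<in>{..m}. I t) = {..<l}"
        "\<forall>s\<le>m. \<forall>t\<le>m. s \<noteq> t \<longrightarrow> I s \<inter> I t = {}"
        "\<forall>r<k. (\<Sum>i\<in>I 0. A r i) = 0"
        "\<forall>t\<in>{1..m}. \<exists>c::nat \<Rightarrow> 'r fract.
            \<forall>r<k. Fract (\<Sum>i\<in>I t. A r i) 1 = (\<Sum>j\<in>(\<Union>s<t. I s). c j * Fract (A r j) 1)"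
      unfolding columns_condition_def by blast
    have C: "\<exists>c::nat \<Rightarrow> 's fract.
            \<forall>r<k. Fract (\<Sum>i\<in>I t. f (A r i)) 1 = (\<Sum>j\<in>(\<Union>s<t. I s). c j * Fract (f (A r j)) 1)"
      if t: "t \<in> {1..m}" for t
    proof -
      obtain c where c: "\<forall>r<k. Fract (\<Sum>i\<in>I t. A r i) 1 = (\<Sum>j\<in>(\<Union>s<t. I s). c j * Fract (A r j) 1)"
        using I(4) t by blast
      show ?thesis
      proof (intro exI allI impI)
        fix r assume "r < k"
        have "Fract (\<Sum>i\<in>I t. f (A r i)) 1 = fhom f (Fract (\<Sum>i\<in>I t. A r i) 1)"
          by (simp add: hF1 fsum)
        also have "\<dots> = fhom f (\<Sum>j\<in>(\<Union>s<t. I s). c j * Fract (A r j) 1)"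
          using c \<open>r < k\<close> by simp
        also have "\<dots> = (\<Sum>j\<in>(\<Union>s<t. I s). fhom f (c j) * Fract (f (A r j)) 1)"
          by (simp add: hsum hmult hF1)
        finally show "Fract (\<Sum>i\<in>I t. f (A r i)) 1 = (\<Sum>j\<in>(\<Union>s<t. I s). fhom f (c j) * Fract (f (A r j)) 1)" .
      qed
    qed
    show "columns_condition k l (\<lambda>r i. f (A r i))"
      unfolding columns_condition_def
      by (intro exI[of _ m] exI[of _ I] conjI) (use I sumeq C in auto)
  next
    assume "columns_condition k l (\<lambda>r i. f (A r i))"
    then obtain m :: nat and I where I: "(\<Union>t\<in>{..m}. I t) = {..<l}"
        "\<forall>s\<le>m. \<forall>t\<le>m. s \<noteq> t \<longrightarrow> I s \<inter> I t = {}"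
        "\<forall>r<k. (\<Sum>i\<in>I 0. f (A r i)) = 0"
        "\<forall>t\<in>{1..m}. \<exists>c::nat \<Rightarrow> 's fract.
            \<forall>r<k. Fract (\<Sum>i\<in>I t. f (A r i)) 1 = (\<Sum>j\<in>(\<Union>s<t. I s). c j * Fract (f (A r j)) 1)"
      unfolding columns_condition_def by blast
    have C: "\<exists>c::nat \<Rightarrow> 'r fract.
            \<forall>r<k. Fract (\<Sum>i\<in>I t. A r i) 1 = (\<Sum>j\<in>(\<Union>s<t. I s). c j * Fract (A r j) 1)"
      if t: "t \<in> {1..m}" for t
    proof -
      obtain c where c: "\<forall>r<k. Fract (\<Sum>i\<in>I t. f (A r i)) 1 = (\<Sum>j\<in>(\<Union>s<t. I s). c j * Fract (f (A r j)) 1)"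
        using I(4) t by blast
      show ?thesis
      proof (intro exI allI impI)
        fix r assume "r < k"
        have "(\<Sum>j\<in>(\<Union>s<t. I s). g (c j) * Fract (A r j) 1)
            = (\<Sum>j\<in>(\<Union>s<t. I s). g (s1 (Fract (A r j) 1) (c j)))"
          by (simp add: vp.linear_scale[OF g(1)] mult.commute)
        also have "\<dots> = g (\<Sum>j\<in>(\<Union>s<t. I s). s1 (Fract (A r j) 1) (c j))"
          by (simp add: vp.linear_sum[OF g(1)])
        also have "(\<Sum>j\<in>(\<Union>s<t. I s). s1 (Fract (A r j) 1) (c j))
            = (\<Sum>j\<in>(\<Union>s<t. I s). c j * Fract (f (A r j)) 1)"
          by (simp add: s1_def hF1 mult.commute)
        also have "\<dots> = s1 (Fract (\<Sum>i\<in>I t. A r i) 1) 1"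
          using c \<open>r < k\<close> by (simp add: s1_def hF1 fsum)
        also have "g \<dots> = Fract (\<Sum>i\<in>I t. A r i) 1"
          by (simp add: vp.linear_scale[OF g(1)] g(2))
        finally show "Fract (\<Sum>i\<in>I t. A r i) 1 = (\<Sum>j\<in>(\<Union>s<t. I s). g (c j) * Fract (A r j) 1)" by simp
      qed
    qed
    show "columns_condition k l A"
      unfolding columns_condition_def
      by (intro exI[of _ m] exI[of _ I] conjI) (use I sumeq C in auto)
  qed
qed

end
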